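(* Let $K\ge 1$ and ${\bf p},{\bf q}\in[0,1]^K$ with $q_k\le p_k$ for all $k$, and let $\Lambda=\{\boldsymbol\lambda\in[0,1]^K: q_k\le\lambda_k\le p_k,\ k=1,\dots,K\}$. Let $\mathcal{V}\subseteq\mathcal{S}_K$ be a closed set (with respect to the Euclidean distance on $\mathbb{R}^K$), and let ${\bf u}\in\mathcal{S}_K$. Then ${\bf u}$ incurs sure loss on $\Lambda$ relative to $\mathcal{V}$ if and only if $({\bf u},{\bf v})$ induces Simpson's paradox in $({\bf p},{\bf q})$ for all ${\bf v}\in\mathcal{V}$.
   Context: $\mathcal{S}_K=\{(v_1,\dots,v_K): \sum_{k=1}^K v_k=1,\ v_k\ge0\}$ is the standard simplex; elements of $\mathcal{S}_K$ are called aggregation rules and $\mathcal{V}$ is the set of desirable aggregation rules. Let $\mathcal{P}_{\mathcal{V}}=\{\boldsymbol\lambda^\top{\bf v}:\boldsymbol\lambda\in\Lambda,\ {\bf v}\in\mathcal{V}\}$. "${\bf u}$ incurs sure loss on $\Lambda$ relative to $\mathcal{V}$" means: $\sup_{\boldsymbol\lambda\in\Lambda}\boldsymbol\lambda^\top{\bf u}<\inf\mathcal{P}_{\mathcal{V}}$ or $\inf_{\boldsymbol\lambda\in\Lambda}\boldsymbol\lambda^\top{\bf u}>\sup\mathcal{P}_{\mathcal{V}}$. "$({\bf u},{\bf v})$ induces Simpson's paradox in $({\bf p},{\bf q})$ for all ${\bf v}\in\mathcal{V}$" means: ${\bf p}^\top{\bf u}<\inf_{{\bf v}\in\mathcal{V}}{\bf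 q}^\top{\bf v}$ or ${\bf q}^\top{\bf u}>\sup_{{\bf v}\in\mathcal{V}}{\bf p}^\top{\bf v}$. *)

theory Defs
  imports "HOL-Analysis.Analysis" "HOL-Library.Extended_Real"
begin

text \<open>Vectors in R^K are modelled as real^'k for a finite index type 'k (so K = CARD('k) \<ge> 1).
  Infima/suprema are taken in the extended reals so that empty sets behave as in the paper
  (inf of empty = +\<infinity>, sup of empty = -\<infinity>).\<close>

definition std_simplex :: "(real^'k) set" where
  "std_simplex = {v. (\<Sum>k\<in>UNIV. v $ k) = 1 \<and> (\<forall>k. 0 \<le> v $ k)}"

definition box_Lambda :: "real^'k \<Rightarrow> real^'k \<Rightarrow> (real^'k) set" where
  "box_Lambda p q = {l. (\<forall>k. 0 \<le> l $ k \<and> l $ k \<le> 1) \<and> (\<forall>k. q $ k \<le> l $ k \<and> l $ k \<le> p $ k)}"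

definition P_V :: "(real^'k) set \<Rightarrow> (real^'k) set \<Rightarrow> real set" where
  "P_V Lam V = {l \<bullet> v | l v. l \<in> Lam \<and> v \<in> V}"

definition sure_loss :: "real^'k \<Rightarrow> (real^'k) set \<Rightarrow> (real^'k) set \<Rightarrow> bool" where
  "sure_loss u Lam V \<longleftrightarrow>
     (SUP l\<in>Lam. ereal (l \<bullet> u)) < (INF x\<in>P_V Lam V. ereal x)
   \<or> (INF l\<in>Lam. ereal (l \<bullet> u)) > (SUP x\<in>P_V Lam V. ereal x)"

definition simpson_all :: "real^'k \<Rightarrow> (real^'k) set \<Rightarrow> real^'k \<Rightarrow> real^'k \<Rightarrow> bool" where
  "simpson_all u V p q \<longleftrightarrow>
     ereal (p \<bullet> u) < (INF v\<in>V. ereal (q \<bullet> v))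
   \<or> ereal (q \<bullet> u) > (SUP v\<in>V. ereal (p \<bullet> v))"

end

theory Submission
  imports Defs
begin

lemma box_bounds:
  fixes l w p q :: "real^'k"
  assumes "l \<in> box_Lambda p q" and "\<forall>k. 0 \<le> w $ k"
  shows "q \<bullet> w \<le> l \<bullet> w" and "l \<bullet> w \<le> p \<bullet> w"
proof -
  have b: "\<forall>k. q $ k \<le> l $ k \<and> l $ k \<le> p $ k" using assms(1) unfolding box_Lambda_def by blast
  show "q \<bullet> w \<le> l \<bullet> w" unfolding inner_vec_def
    by (rule sum_mono) (simp add: b assms(2) mult_right_mono)
  show "l \<bullet> w \<le> p \<bullet> w" unfolding inner_vec_def
    by (rule sum_mono) (simp add: b assms(2) mult_right_mono)
qed

lemma simp_nonneg: "w \<in> std_simplex \<Longrightarrow> \<forall>k. 0 \<le> w $ k"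
  unfolding std_simplex_def by blast

theorem theorem4p1:
  fixes p q u :: "real^'k" and V :: "(real^'k) set"
  assumes "\<forall>k. 0 \<le> p $ k \<and> p $ k \<le> 1"
    and "\<forall>k. 0 \<le> q $ k \<and> q $ k \<le> 1"
    and "\<forall>k. q $ k \<le> p $ k"
    and "V \<subseteq> std_simplex"
    and "closed V"
    and "u \<in> std_simplex"
  shows "sure_loss u (box_Lambda p q) V \<longleftrightarrow> simpson_all u V p q"
proof -
  let ?L = "box_Lambda p q"
  have pL: "p \<in> ?L" using assms(1,3) unfolding box_Lambda_def by auto
  have qL: "q \<in> ?L" using assms(2,3) unfolding box_Lambda_def by auto
  have un: "\<forall>k. 0 \<le> u $ k" using assms(6) by (rule simp_nonneg)
  have vn: "\<And>v. v \<in> V \<Longrightarrow> \<forall>k. 0 \<le> v $ k" using assms(4) simp_nonneg by blast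
  have e1: "(SUP l\<in>?L. ereal (l \<bullet> u)) = ereal (p \<bullet> u)"
  proof (rule antisym)
    show "(SUP l\<in>?L. ereal (l \<bullet> u)) \<le> ereal (p \<bullet> u)"
      by (rule SUP_least) (simp add: box_bounds(2)[OF _ un])
    show "ereal (p \<bullet> u) \<le> (SUP l\<in>?L. ereal (l \<bullet> u))"
      by (rule SUP_upper[OF pL])
  qed
  have e2: "(INF l\<in>?L. ereal (l \<bullet> u)) = ereal (q \<bullet> u)"
  proof (rule antisym)
    show "(INF l\<in>?L. ereal (l \<bullet> u)) \<le> ereal (q \<bullet> u)"
      by (rule INF_lower[OF qL])
    show "ereal (q \<bullet> u) \<le> (INF l\<in>?L. ereal (l \<bullet> u))"
      by (rule INF_greatest) (simp add: box_bounds(1)[OF _ un])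
  qed
  have e3: "(INF x\<in>P_V ?L V. ereal x) = (INF v\<in>V. ereal (q \<bullet> v))"
  proof (rule antisym)
    show "(INF x\<in>P_V ?L V. ereal x) \<le> (INF v\<in>V. ereal (q \<bullet> v))"
    proof (rule INF_greatest)
      fix v assume "v \<in> V"
      then have "q \<bullet> v \<in> P_V ?L V" unfolding P_V_def using qL by blast
      then show "(INF x\<in>P_V ?L V. ereal x) \<le> ereal (q \<bullet> v)" by (rule INF_lower)
    qed
    show "(INF v\<in>V. ereal (q \<bullet> v)) \<le> (INF x\<in>P_V ?L V. ereal x)"
    proof (rule INF_greatest)
      fix x assume "x \<in> P_V ?L V"
      then obtain l v where lv: "x = l \<bullet> v" "l \<in> ?L" "v \<in> V" unfolding P_V_def by blast
      have "(INF v\<in>V. ereal (q \<bullet> v)) \<le> ereal (q \<bullet> v)" by (rule INF_lower[OF lv(3)])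
      also have "\<dots> \<le> ereal x" using box_bounds(1)[OF lv(2) vn[OF lv(3)]] lv(1) by simp
      finally show "(INF v\<in>V. ereal (q \<bullet> v)) \<le> ereal x" .
    qed
  qed
  have e4: "(SUP x\<in>P_V ?L V. ereal x) = (SUP v\<in>V. ereal (p \<bullet> v))"
  proof (rule antisym)
    show "(SUP v\<in>V. ereal (p \<bullet> v)) \<le> (SUP x\<in>P_V ?L V. ereal x)"
    proof (rule SUP_least)
      fix v assume "v \<in> V"
      then have "p \<bullet> v \<in> P_V ?L V" unfolding P_V_def using pL by blast
      then show "ereal (p \<bullet> v) \<le> (SUP x\<in>P_V ?L V. ereal x)" by (rule SUP_upper)
    qed
    show "(SUP x\<in>P_V ?L V. ereal x) \<le> (SUP v\<in>V. ereal (p \<bullet> v))"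
    proof (rule SUP_least)
      fix x assume "x \<in> P_V ?L V"
      then obtain l v where lv: "x = l \<bullet> v" "l \<in> ?L" "v \<in> V" unfolding P_V_def by blast
      have "ereal x \<le> ereal (p \<bullet> v)" using box_bounds(2)[OF lv(2) vn[OF lv(3)]] lv(1) by simp
      also have "\<dots> \<le> (SUP v\<in>V. ereal (p \<bullet> v))" by (rule SUP_upper[OF lv(3)])
      finally show "ereal x \<le> (SUP v\<in>V. ereal (p \<bullet> v))" .
    qed
  qed
  show ?thesis unfolding sure_loss_def simpson_all_def e1 e2 e3 e4 by simp
qed

end
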